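(* Let $x\in[0,1]^d$ and $0<h<R$. Under Assumption (A3), there exist $1\le i,j\le l$ such that $B_2(x,h)\subset\overline{M_i}\cup\overline{M_j}$.
   Context: $M_1,\dots,M_l$ are disjoint open subsets of $[0,1]^d$ with $\bigcup_i\overline{M_i}=[0,1]^d$. Assumption (A3): $\Gamma:=\bigcup_{i=1}^l\partial M_i\cap]0,1[^d$ is a $C^{1,1}$ hypersurface with $\operatorname{reach}(\Gamma)\ge R$ and Hausdorff distance $d_2(\Gamma,\partial[0,1]^d)\ge R$, where $\operatorname{reach}(A)$ is the supremum of $r$ such that every $x\notin A$ with $\operatorname{dist}(x,A)<r$ has a unique nearest point in $A$. $B_2(x,h)=\{y\in[0,1]^d:\|x-y\|_2\le h\}$. *)

theory Defs
  imports "HOL-Analysis.Analysis"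
begin

text \<open>Reach of a set (Federer): the supremum of all r such that every point x outside A
  whose distance to A is less than r has a unique nearest point in A.
  "dist(x,A) < r" is written as "some point of A is closer than r", so that the
  usual convention dist(x,{}) = infinity is respected (reach of the empty set is infinite).\<close>
definition reach :: "'a::metric_space set \<Rightarrow> ereal" where
  "reach A = Sup {ereal r | r. \<forall>x. x \<notin> A \<and> (\<exists>a\<in>A. dist x a < r) \<longrightarrow>
       (\<exists>!y. y \<in> A \<and> (\<forall>a\<in>A. dist x y \<le> dist x a))}"

definition C11_hypersurface :: "'a::euclidean_space set \<Rightarrow> bool" where
  "C11_hypersurface G \<longleftrightarrow>
     (\<forall>p\<in>G. \<exists>U (f::'a \<Rightarrow> real) f' L. open U \<and> p \<in> U \<and>
        (\<forall>y\<in>U. (f has_derivative f' y) (at y)) \<and>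
        (\<forall>y\<in>U. \<forall>z\<in>U. \<forall>v. \<bar>f' y v - f' z v\<bar> \<le> L * dist y z * norm v) \<and>
        (\<forall>y\<in>U. \<exists>v. f' y v \<noteq> 0) \<and>
        G \<inter> U = {y\<in>U. f y = 0})"

end

theory Submission
  imports Defs
begin

definition GG :: "(nat \<Rightarrow> 'a::euclidean_space set) \<Rightarrow> nat \<Rightarrow> 'a set" where
  "GG M l = (\<Union>i\<in>{1..l}. frontier (M i)) \<inter> box 0 One"

definition SS :: "(nat \<Rightarrow> 'a::euclidean_space set) \<Rightarrow> nat \<Rightarrow> 'a \<Rightarrow> nat set" where
  "SS M l p = {i\<in>{1..l}. p \<in> closure (M i)}"

locale setting =
  fixes M :: "nat \<Rightarrow> 'a::euclidean_space set" and l :: nat and R :: real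
  assumes open_M: "\<forall>i\<in>{1..l}. openin (top_of_set (cbox 0 One)) (M i)"
    and disj_M: "\<forall>i\<in>{1..l}. \<forall>j\<in>{1..l}. i \<noteq> j \<longrightarrow> M i \<inter> M j = {}"
    and cover: "(\<Union>i\<in>{1..l}. closure (M i)) = cbox 0 One"
    and hyp: "C11_hypersurface (GG M l)"
    and reach: "reach (GG M l) \<ge> ereal R"
    and bdist: "\<forall>p\<in>GG M l. \<forall>q\<in>frontier (cbox 0 One). R \<le> dist p q"
    and Rpos: "R > 0"
begin

lemma M_sub: "i \<in> {1..l} \<Longrightarrow> M i \<subseteq> cbox 0 One"
  using open_M openin_subset by fastforce

lemma M_open: "i \<in> {1..l} \<Longrightarrow> open (M i \<inter> box 0 One)"
proof -
  assume i: "i \<in> {1..l}"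
  then obtain W where W: "open W" "M i = cbox 0 One \<inter> W"
    using open_M by (meson openin_open)
  have "M i \<inter> box 0 One = W \<inter> box 0 One"
    using W box_subset_cbox by blast
  then show ?thesis using W open_box[of 0 One] by (metis open_Int)
qed

lemma M_closure: "i \<in> {1..l} \<Longrightarrow> closure (M i) = closure (M i \<inter> box 0 One)"
proof -
  assume i: "i \<in> {1..l}"
  then obtain W where W: "open W" "M i = cbox 0 One \<inter> W"
    using open_M by (meson openin_open)
  have "M i \<subseteq> closure (M i \<inter> box 0 One)"
  proof -
    have "W \<inter> closure (box 0 One) \<subseteq> closure (W \<inter> box (0::'a) One)"
      by (rule open_Int_closure_subset[OF W(1)])
    moreover have "W \<inter> box 0 One = M i \<inter> box 0 One"
      using W box_subset_cbox by blast
    ultimately show ?thesis using W by auto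
  qed
  then have "closure (M i) \<subseteq> closure (M i \<inter> box 0 One)"
    by (simp add: closure_minimal)
  moreover have "closure (M i \<inter> box 0 One) \<subseteq> closure (M i)"
    by (simp add: closure_mono)
  ultimately show ?thesis by blast
qed

lemma M_notG: "c \<in> {1..l} \<Longrightarrow> z \<in> M c \<Longrightarrow> z \<notin> GG M l"
proof
  assume c: "c \<in> {1..l}" and z: "z \<in> M c" and zG: "z \<in> GG M l"
  then have zb: "z \<in> box 0 One" by (simp add: GG_def)
  obtain k where k: "k \<in> {1..l}" "z \<in> frontier (M k)" using zG by (auto simp: GG_def)
  have oz: "open (M c \<inter> box 0 One)" "z \<in> M c \<inter> box 0 One" using M_open c z zb by auto
  show False
  proof (cases "k = c")
    case True
    then have "z \<in> interior (M k)"
      using oz by (metis IntD1 interior_maximal interior_subset inf_le1 interior_open subsetD)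
    then show False using k by (simp add: frontier_def)
  next
    case False
    then have "M c \<inter> M k = {}" using disj_M c k by auto
    moreover have "z \<in> closure (M k)" using k frontier_def by auto
    ultimately show False using oz
      by (metis (no_types, lifting) Int_iff closure_iff_nhds_not_empty disjoint_iff inf_le1)
  qed
qed

lemma box_minus_G: "z \<in> box 0 One \<Longrightarrow> z \<notin> GG M l \<Longrightarrow> \<exists>k\<in>{1..l}. z \<in> M k"
proof -
  assume zb: "z \<in> box 0 One" and zG: "z \<notin> GG M l"
  have "z \<in> cbox 0 One" using zb box_subset_cbox by blast
  then obtain k where k: "k \<in> {1..l}" "z \<in> closure (M k)" using cover by blast
  have "z \<notin> frontier (M k)" using zG zb k by (auto simp: GG_def)
  then have "z \<in> interior (M k)" using k by (simp add: frontier_def)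
  then show ?thesis using k interior_subset by blast
qed

lemma conn_region:
  assumes C: "connected C" "C \<subseteq> box 0 One - GG M l" and z: "z \<in> C" "z \<in> M a" and a: "a \<in> {1..l}"
  shows "C \<subseteq> M a"
proof -
  let ?A = "M a \<inter> box 0 One" and ?B = "\<Union>k\<in>{1..l}-{a}. M k \<inter> box 0 One"
  have oA: "open ?A" using M_open a by blast
  have oB: "open ?B" using M_open by blast
  have cov: "C \<subseteq> ?A \<union> ?B" using C box_minus_G by fastforce
  have dis: "?A \<inter> ?B \<inter> C = {}" using disj_M a by blast
  have "?A \<inter> C \<noteq> {}" using z C by blast
  then have "?B \<inter> C = {}" using connectedD[OF C(1) oA oB dis cov] by blast
  then show ?thesis using cov by blast
qed

lemma G_closed: "closed (GG M l)"
proof -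
  let ?F = "\<Union>i\<in>{1..l}. frontier (M i)"
  have cF: "closed ?F" by (intro closed_UN) auto
  have "closure (GG M l) \<subseteq> GG M l"
  proof
    fix z assume z: "z \<in> closure (GG M l)"
    have "z \<in> closure ?F" using z closure_mono[of "GG M l" ?F] by (auto simp: GG_def)
    then have zF: "z \<in> ?F" using cF by simp
    have "z \<in> closure (box 0 One)" using z closure_mono[of "GG M l" "box 0 One"] by (auto simp: GG_def)
    then have zc: "z \<in> cbox 0 One" by simp
    show "z \<in> GG M l"
    proof (rule ccontr)
      assume "z \<notin> GG M l"
      then have "z \<notin> box 0 One" using zF unfolding GG_def by blast
      then have "z \<in> frontier (cbox 0 One)" using zc by (simp add: frontier_def)
      moreover obtain p where "p \<in> GG M l" "dist p z < R"
        using z Rpos by (metis closure_approachable dist_commute)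
      ultimately show False using bdist by fastforce
    qed
  qed
  then show ?thesis using closure_subset_eq by blast
qed

lemma G_compact: "compact (GG M l)"
proof -
  have "bounded (GG M l)"
    by (rule bounded_subset[OF bounded_cbox[of 0 One]]) (auto simp: GG_def dest: subsetD[OF box_subset_cbox])
  then show ?thesis using G_closed compact_eq_bounded_closed by blast
qed

end

context setting
begin

lemma local_chart:
  assumes p: "p \<in> GG M l"
  shows "\<exists>V a b. open V \<and> p \<in> V \<and> (\<forall>q\<in>GG M l \<inter> V. SS M l q = {a,b})"
proof -
  obtain U and f :: "'a \<Rightarrow> real" and f' L where U: "open U" "p \<in> U"
    and der: "\<forall>y\<in>U. (f has_derivative f' y) (at y)"
    and lip: "\<forall>y\<in>U. \<forall>z\<in>U. \<forall>v. \<bar>f' y v - f' z v\<bar> \<le> L * dist y z * norm v"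
    and nz: "\<forall>y\<in>U. \<exists>v. f' y v \<noteq> 0"
    and zero: "GG M l \<inter> U = {y\<in>U. f y = 0}"
    using hyp[unfolded C11_hypersurface_def, rule_format, OF p] by blast
  have lin: "\<And>y. y \<in> U \<Longrightarrow> linear (f' y)" using der has_derivative_linear by blast
  obtain v where v: "f' p v \<noteq> 0" using nz U by blast
  have v0: "v \<noteq> 0" using v lin[OF U(2)] linear_0 by fastforce
  define n where "n = (if f' p v > 0 then v else -v) /\<^sub>R norm v"
  have n1: "norm n = 1" using v0 by (simp add: n_def)
  have nn: "n \<bullet> n = 1" using n1 by (simp add: dot_square_norm)
  have fsc: "\<And>y c w. y \<in> U \<Longrightarrow> f' y (c *\<^sub>R w) = c * f' y w"
    using lin by (simp add: linear_scale)
  have "f' p n = (if f' p v > 0 then f' p v else - f' p v) / norm v"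
    using fsc[OF U(2)] lin[OF U(2)] by (simp add: n_def linear_neg divide_inverse mult.commute)
  then have c: "f' p n > 0" using v v0 by auto
  obtain r0 where r0: "r0 > 0" "ball p r0 \<subseteq> U \<inter> box 0 One"
  proof -
    have pUb: "p \<in> U \<inter> box 0 One" using U p by (auto simp: GG_def)
    have "open (U \<inter> box 0 One)" using U(1) open_box by (rule open_Int)
    then show ?thesis using that pUb unfolding open_contains_ball by blast
  qed
  define r where "r = min r0 (f' p n / (2 * (\<bar>L\<bar> + 1)))"
  have rpos: "r > 0" using r0 c by (simp add: r_def)
  have rU: "ball p r \<subseteq> U \<inter> box 0 One" using r0 by (auto simp: r_def)
  have fpos: "f' y n > 0" if y: "y \<in> ball p r" for y
  proof -
    have yU: "y \<in> U" using y rU by auto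
    have "\<bar>f' y n - f' p n\<bar> \<le> L * dist y p * norm n" using lip yU U by blast
    also have "\<dots> \<le> \<bar>L\<bar> * r"
    proof -
      have "dist y p \<le> r" using y by (simp add: dist_commute less_imp_le)
      then have "L * dist y p \<le> \<bar>L\<bar> * r"
        by (metis abs_ge_self mult_right_mono zero_le_dist order_trans abs_ge_zero mult_left_mono)
      then show ?thesis using n1 by simp
    qed
    also have "\<dots> \<le> \<bar>L\<bar> * (f' p n / (2 * (\<bar>L\<bar> + 1)))"
      by (intro mult_left_mono) (auto simp: r_def)
    also have "\<dots> < f' p n / 2"
    proof -
      have "\<bar>L\<bar> * (f' p n / (2 * (\<bar>L\<bar> + 1))) = f' p n / 2 * (\<bar>L\<bar> / (\<bar>L\<bar> + 1))" by (simp add: field_simps)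
      also have "\<dots> < f' p n / 2 * 1"
        using c by (intro mult_strict_left_mono) auto
      finally show ?thesis by simp
    qed
    finally show ?thesis by linarith
  qed
  have mono: "f y < f (y + t *\<^sub>R n)" if y: "y \<in> ball p r" "y + t *\<^sub>R n \<in> ball p r" and t: "t > 0" for y t
  proof -
    have inb: "y + s *\<^sub>R n \<in> ball p r" if "0 \<le> s" "s \<le> t" for s
    proof -
      have "y + s *\<^sub>R n = (1 - s/t) *\<^sub>R y + (s/t) *\<^sub>R (y + t *\<^sub>R n)"
        using t by (simp add: algebra_simps)
      moreover have "(1 - s/t) *\<^sub>R y + (s/t) *\<^sub>R (y + t *\<^sub>R n) \<in> ball p r"
        using convex_ball[of p r] y that t unfolding convex_alt by auto
      ultimately show ?thesis by simp
    qed
    show ?thesis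
    proof (rule DERIV_pos_imp_increasing[of 0 t "\<lambda>s. f (y + s *\<^sub>R n)", simplified])
      show "0 < t" by fact
      fix s assume s: "0 \<le> s" "s \<le> t"
      have yU: "y + s *\<^sub>R n \<in> U" using inb[OF s] rU by auto
      have "((\<lambda>s. f (y + s *\<^sub>R n)) has_derivative (\<lambda>u. f' (y + s *\<^sub>R n) (u *\<^sub>R n))) (at s)"
        by (rule has_derivative_compose[of "\<lambda>s. y + s *\<^sub>R n" "\<lambda>u. u *\<^sub>R n" s UNIV f])
           (auto intro!: derivative_eq_intros der[rule_format] yU)
      moreover have "(\<lambda>u. f' (y + s *\<^sub>R n) (u *\<^sub>R n)) = (*) (f' (y + s *\<^sub>R n) n)"
        using fsc[OF yU] by (auto simp: mult.commute)
      ultimately have "DERIV (\<lambda>s. f (y + s *\<^sub>R n)) s :> f' (y + s *\<^sub>R n) n"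
        by (simp add: has_field_derivative_def)
      then show "\<exists>D. DERIV (\<lambda>s. f (y + s *\<^sub>R n)) s :> D \<and> 0 < D"
        using fpos[OF inb[OF s]] by blast
    qed
  qed
  have monole: "f y \<le> f (y + t *\<^sub>R n)" if y: "y \<in> ball p r" "y + t *\<^sub>R n \<in> ball p r" and t: "t \<ge> 0" for y t
    using mono[OF y] t by (cases "t = 0") force+

  define t0 where "t0 = r / 4"
  have t0: "t0 > 0" using rpos by (simp add: t0_def)
  define pt where "pt = p + t0 *\<^sub>R n"
  define pb where "pb = p - t0 *\<^sub>R n"
  have pU: "p \<in> ball p r" using rpos by simp
  have ptb: "pt \<in> ball p r" using n1 rpos by (simp add: pt_def t0_def dist_norm)
  have pbb: "pb \<in> ball p r" using n1 rpos by (simp add: pb_def t0_def dist_norm)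
  have fp: "f p = 0" using p U zero by blast
  have fpt: "f pt > 0" using mono[OF pU, of t0] ptb t0 fp by (simp add: pt_def)
  have fpb: "f pb < 0" using mono[OF pbb, of t0] pU t0 fp by (simp add: pb_def)
  have contf: "\<And>y. y \<in> U \<Longrightarrow> continuous (at y) f"
    using der has_derivative_continuous by blast
  obtain d1 where d1: "d1 > 0" "\<forall>z. dist z pt < d1 \<longrightarrow> f z > 0"
  proof -
    have "continuous (at pt) f" using contf ptb rU by blast
    then obtain d where dd: "d > 0" and de: "\<forall>z. dist z pt < d \<longrightarrow> dist (f z) (f pt) < f pt"
      using fpt unfolding continuous_at_eps_delta by blast
    have "\<forall>z. dist z pt < d \<longrightarrow> f z > 0"
    proof (intro allI impI)
      fix z assume "dist z pt < d"
      then have "\<bar>f z - f pt\<bar> < f pt" using de by (simp add: dist_real_def)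
      then show "f z > 0" by linarith
    qed
    then show ?thesis using that dd by blast
  qed
  obtain d2 where d2: "d2 > 0" "\<forall>z. dist z pb < d2 \<longrightarrow> f z < 0"
  proof -
    have "continuous (at pb) f" using contf pbb rU by blast
    then obtain d where dd: "d > 0" and de: "\<forall>z. dist z pb < d \<longrightarrow> dist (f z) (f pb) < - f pb"
      using fpb unfolding continuous_at_eps_delta by (meson neg_0_less_iff_less)
    have "\<forall>z. dist z pb < d \<longrightarrow> f z < 0"
    proof (intro allI impI)
      fix z assume "dist z pb < d"
      then have "\<bar>f z - f pb\<bar> < - f pb" using de by (simp add: dist_real_def)
      then show "f z < 0" by linarith
    qed
    then show ?thesis using that dd by blast
  qed
  define d where "d = min (r/4) (min d1 d2)"
  have d: "d > 0" "d \<le> r/4" "d \<le> d1" "d \<le> d2" using d1 d2 rpos by (auto simp: d_def)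
  define sc where "sc z = (z - p) \<bullet> n" for z
  define wc where "wc z = (z - p) - sc z *\<^sub>R n" for z
  define V where "V = {z. \<bar>sc z\<bar> < r/2 \<and> norm (wc z) < d}"
  have decomp: "z = p + wc z + sc z *\<^sub>R n" for z by (simp add: wc_def)
  have oV: "open V"
    unfolding V_def sc_def wc_def
    by (intro open_Collect_conj open_Collect_less continuous_intros)
  have Vball: "V \<subseteq> ball p r"
  proof
    fix z assume z: "z \<in> V"
    have "norm (z - p) \<le> norm (wc z) + norm (sc z *\<^sub>R n)"
    proof -
      have "z - p = wc z + sc z *\<^sub>R n" by (simp add: wc_def)
      then show ?thesis using norm_triangle_ineq[of "wc z" "sc z *\<^sub>R n"] by simp
    qed
    also have "\<dots> < d + r/2" using z n1 by (simp add: V_def)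
    also have "\<dots> \<le> r" using d by simp
    finally show "z \<in> ball p r" by (simp add: dist_norm norm_minus_commute)
  qed
  have pV: "p \<in> V" using rpos d by (simp add: V_def sc_def wc_def)
  have VU: "V \<subseteq> U" "V \<subseteq> box 0 One" using Vball rU by auto
  have offG: "z \<notin> GG M l" if "z \<in> U" "f z \<noteq> 0" for z
  proof
    assume "z \<in> GG M l"
    then have "z \<in> {y\<in>U. f y = 0}" using that zero by blast
    then show False using that by simp
  qed
  have inG: "z \<in> GG M l" if "z \<in> U" "f z = 0" for z
  proof -
    have "z \<in> {y\<in>U. f y = 0}" using that by simp
    then show ?thesis using zero by blast
  qed
  have onG: "f z = 0" if "z \<in> U" "z \<in> GG M l" for z
    using offG that by blast
  have ptG: "pt \<in> box 0 One" "pt \<notin> GG M l"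
    using ptb rU fpt offG by auto
  obtain a where a: "a \<in> {1..l}" "pt \<in> M a" using box_minus_G ptG by blast
  have pbG: "pb \<in> box 0 One" "pb \<notin> GG M l"
    using pbb rU fpb offG by auto
  obtain b where b: "b \<in> {1..l}" "pb \<in> M b" using box_minus_G pbG by blast
  have scs: "sc (z + t *\<^sub>R n) = sc z + t" for z t by (simp add: sc_def algebra_simps nn inner_add_left)
  have wcs: "wc (z + t *\<^sub>R n) = wc z" for z t by (simp add: wc_def scs algebra_simps)
  have pos_region: "z \<in> M a" if z: "z \<in> V" "f z > 0" for z
  proof -
    define z' where "z' = z + (t0 - sc z) *\<^sub>R n"
    have "z' - pt = wc z" by (simp add: z'_def pt_def wc_def algebra_simps)
    then have dz': "dist z' pt < d" using z by (simp add: V_def dist_norm)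
    have ballpt: "ball pt d \<subseteq> ball p r \<inter> {y. f y > 0}"
    proof
      fix y assume y: "y \<in> ball pt d"
      then have "f y > 0" using d1 d by (simp add: dist_commute)
      moreover have "dist p y < r"
      proof -
        have "dist p y \<le> dist p pt + dist pt y" by (rule dist_triangle)
        also have "dist p pt = t0" using n1 t0 by (simp add: pt_def dist_norm)
        finally show ?thesis using y d by (simp add: t0_def)
      qed
      ultimately show "y \<in> ball p r \<inter> {y. f y > 0}" by simp
    qed
    have seg: "closed_segment z z' \<subseteq> V \<inter> {y. f y > 0}"
    proof
      fix u assume "u \<in> closed_segment z z'"
      then obtain \<tau> where tau: "0 \<le> \<tau>" "\<tau> \<le> 1" "u = (1 - \<tau>) *\<^sub>R z + \<tau> *\<^sub>R z'"
        by (auto simp: closed_segment_def)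
      have u: "u = z + (\<tau> * (t0 - sc z)) *\<^sub>R n" using tau by (simp add: z'_def algebra_simps)
      have scu: "sc u = sc z + \<tau> * (t0 - sc z)" using u scs by simp
      have "\<bar>sc z\<bar> < r/2" "t0 < r/2" using z rpos by (auto simp: V_def t0_def)
      then have "\<bar>sc u\<bar> < r/2"
      proof -
        assume h1: "\<bar>sc z\<bar> < r/2" "t0 < r/2"
        have eq: "sc u = (1-\<tau>) * sc z + \<tau> * (t0)" using scu by (simp add: algebra_simps)
        have "\<bar>sc u\<bar> \<le> \<bar>(1-\<tau>) * sc z\<bar> + \<bar>\<tau> * (t0)\<bar>" unfolding eq by (rule abs_triangle_ineq)
        also have "\<dots> = (1-\<tau>) * \<bar>sc z\<bar> + \<tau> * \<bar>t0\<bar>" using tau by (simp add: abs_mult)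
        also have "\<dots> < r/2"
          by (rule convex_bound_lt) (use h1 tau t0 in auto)
        finally show ?thesis .
      qed
      moreover have "wc u = wc z" using u wcs by simp
      ultimately have uV: "u \<in> V" using z by (simp add: V_def)
      have "f u > 0"
      proof (cases "sc z \<le> t0")
        case True
        have "f z \<le> f (z + (\<tau> * (t0 - sc z)) *\<^sub>R n)"
          by (rule monole) (use z uV u Vball tau True in auto)
        then have "f z \<le> f u" using u by simp
        then show ?thesis using z by simp
      next
        case False
        have "z' \<in> ball pt d" using dz' by (simp add: dist_commute)
        then have z'V: "z' \<in> ball p r" using ballpt by blast
        have "u = z' + ((1 - \<tau>) * (sc z - t0)) *\<^sub>R n" using u by (simp add: z'_def algebra_simps)
        then have "f z' \<le> f u" using monole[OF z'V, of "(1 - \<tau>) * (sc z - t0)"] uV Vball tau False by auto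
        moreover have "f z' > 0" using dz' d1 d by simp
        ultimately show ?thesis by simp
      qed
      then show "u \<in> V \<inter> {y. f y > 0}" using uV by simp
    qed
    let ?C = "closed_segment z z' \<union> ball pt d"
    have "connected ?C"
      by (rule connected_Un) (use dz' in \<open>auto simp: dist_commute\<close>)
    moreover have "?C \<subseteq> box 0 One - GG M l"
    proof -
      have "ball p r \<inter> {y. f y > 0} \<subseteq> box 0 One - GG M l" using rU offG by fastforce
      moreover have "V \<inter> {y. f y > 0} \<subseteq> box 0 One - GG M l" using VU offG by fastforce
      ultimately show ?thesis using seg ballpt by blast
    qed
    moreover have "pt \<in> ?C" using d by simp
    ultimately have "?C \<subseteq> M a" using conn_region a by blast
    then show ?thesis by auto
  qed
  have neg_region: "z \<in> M b" if z: "z \<in> V" "f z < 0" for z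
  proof -
    define z' where "z' = z + (- t0 - sc z) *\<^sub>R n"
    have "z' - pb = wc z" by (simp add: z'_def pb_def wc_def algebra_simps)
    then have dz': "dist z' pb < d" using z by (simp add: V_def dist_norm)
    have ballpb: "ball pb d \<subseteq> ball p r \<inter> {y. f y < 0}"
    proof
      fix y assume y: "y \<in> ball pb d"
      then have "f y < 0" using d2 d by (simp add: dist_commute)
      moreover have "dist p y < r"
      proof -
        have "dist p y \<le> dist p pb + dist pb y" by (rule dist_triangle)
        also have "dist p pb = t0" using n1 t0 by (simp add: pb_def dist_norm)
        finally show ?thesis using y d by (simp add: t0_def)
      qed
      ultimately show "y \<in> ball p r \<inter> {y. f y < 0}" by simp
    qed
    have seg: "closed_segment z z' \<subseteq> V \<inter> {y. f y < 0}"
    proof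
      fix u assume "u \<in> closed_segment z z'"
      then obtain \<tau> where tau: "0 \<le> \<tau>" "\<tau> \<le> 1" "u = (1 - \<tau>) *\<^sub>R z + \<tau> *\<^sub>R z'"
        by (auto simp: closed_segment_def)
      have u: "u = z + (\<tau> * (- t0 - sc z)) *\<^sub>R n" using tau by (simp add: z'_def algebra_simps)
      have scu: "sc u = sc z + \<tau> * (- t0 - sc z)" using u scs by simp
      have "\<bar>sc z\<bar> < r/2" "t0 < r/2" using z rpos by (auto simp: V_def t0_def)
      then have "\<bar>sc u\<bar> < r/2"
      proof -
        assume h1: "\<bar>sc z\<bar> < r/2" "t0 < r/2"
        have eq: "sc u = (1-\<tau>) * sc z + \<tau> * (- t0)" using scu by (simp add: algebra_simps)
        have "\<bar>sc u\<bar> \<le> \<bar>(1-\<tau>) * sc z\<bar> + \<bar>\<tau> * (- t0)\<bar>" unfolding eq by (rule abs_triangle_ineq)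
        also have "\<dots> = (1-\<tau>) * \<bar>sc z\<bar> + \<tau> * \<bar>- t0\<bar>" using tau by (simp add: abs_mult)
        also have "\<dots> < r/2"
          by (rule convex_bound_lt) (use h1 tau t0 in auto)
        finally show ?thesis .
      qed
      moreover have "wc u = wc z" using u wcs by simp
      ultimately have uV: "u \<in> V" using z by (simp add: V_def)
      have "f u < 0"
      proof (cases "sc z \<ge> - t0")
        case True
        define lam where "lam = \<tau> * (t0 + sc z)"
        have lam0: "lam \<ge> 0" using tau True by (simp add: lam_def)
        have zu: "z = u + lam *\<^sub>R n" using u by (simp add: lam_def algebra_simps)
        have uB: "u \<in> ball p r" using uV Vball by blast
        have zB: "u + lam *\<^sub>R n \<in> ball p r" using z(1) Vball zu by auto
        have "f u \<le> f (u + lam *\<^sub>R n)" by (rule monole[OF uB zB lam0])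
        then have "f u \<le> f z" using zu by simp
        then show ?thesis using z by simp
      next
        case False
        have "z' \<in> ball pb d" using dz' by (simp add: dist_commute)
        then have z'V: "z' \<in> ball p r" using ballpb by blast
        define lam where "lam = (1 - \<tau>) * (- t0 - sc z)"
        have lam0: "lam \<ge> 0" using tau False by (simp add: lam_def)
        have zu: "z' = u + lam *\<^sub>R n" using u by (simp add: lam_def z'_def algebra_simps)
        have uB: "u \<in> ball p r" using uV Vball by blast
        have zB: "u + lam *\<^sub>R n \<in> ball p r" using z'V zu by auto
        have "f u \<le> f (u + lam *\<^sub>R n)" by (rule monole[OF uB zB lam0])
        then have "f u \<le> f z'" using zu by simp
        moreover have "f z' < 0" using dz' d2 d by simp
        ultimately show ?thesis by simp
      qed
      then show "u \<in> V \<inter> {y. f y < 0}" using uV by simp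
    qed
    let ?C = "closed_segment z z' \<union> ball pb d"
    have "connected ?C"
      by (rule connected_Un) (use dz' in \<open>auto simp: dist_commute\<close>)
    moreover have "?C \<subseteq> box 0 One - GG M l"
    proof -
      have "ball p r \<inter> {y. f y < 0} \<subseteq> box 0 One - GG M l" using rU offG by fastforce
      moreover have "V \<inter> {y. f y < 0} \<subseteq> box 0 One - GG M l" using VU offG by fastforce
      ultimately show ?thesis using seg ballpb by blast
    qed
    moreover have "pb \<in> ?C" using d by simp
    ultimately have "?C \<subseteq> M b" using conn_region b by blast
    then show ?thesis by auto
  qed
  have "\<forall>q\<in>GG M l \<inter> V. SS M l q = {a,b}"
  proof
    fix q assume q: "q \<in> GG M l \<inter> V"
    obtain eta where eta: "eta > 0" "ball q eta \<subseteq> V" using q oV open_contains_ball by blast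
    have fq: "f q = 0" using q VU onG by blast
    have qb: "q \<in> ball p r" using q Vball by blast
    have qa: "q \<in> closure (M a)" unfolding closure_approachable
    proof (intro allI impI)
      fix e :: real assume e: "e > 0"
      define lam where "lam = min (e/2) (eta/2)"
      have lam: "lam > 0" "lam < e" "lam < eta" using e eta by (auto simp: lam_def)
      have "q + lam *\<^sub>R n \<in> ball q eta" using lam n1 by (simp add: dist_norm)
      then have zin: "q + lam *\<^sub>R n \<in> V" using eta(2) by blast
      have zb: "q + lam *\<^sub>R n \<in> ball p r" using zin Vball by blast
      have "f q < f (q + lam *\<^sub>R n)" by (rule mono[OF qb zb lam(1)])
      then have "f (q + lam *\<^sub>R n) > 0" using fq by simp
      then have "q + lam *\<^sub>R n \<in> M a" using pos_region zin by blast
      moreover have "dist (q + lam *\<^sub>R n) q < e" using lam n1 by (simp add: dist_norm)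
      ultimately show "\<exists>y\<in>M a. dist y q < e" by blast
    qed
    have qbb: "q \<in> closure (M b)" unfolding closure_approachable
    proof (intro allI impI)
      fix e :: real assume e: "e > 0"
      define lam where "lam = min (e/2) (eta/2)"
      have lam: "lam > 0" "lam < e" "lam < eta" using e eta by (auto simp: lam_def)
      have "q - lam *\<^sub>R n \<in> ball q eta" using lam n1 by (simp add: dist_norm)
      then have zin: "q - lam *\<^sub>R n \<in> V" using eta(2) by blast
      have zb: "q - lam *\<^sub>R n \<in> ball p r" using zin Vball by blast
      have qb': "q - lam *\<^sub>R n + lam *\<^sub>R n \<in> ball p r" using qb by simp
      have "f (q - lam *\<^sub>R n) < f (q - lam *\<^sub>R n + lam *\<^sub>R n)"
        by (rule mono[OF zb qb' lam(1)])
      then have "f (q - lam *\<^sub>R n) < 0" using fq by simp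
      then have "q - lam *\<^sub>R n \<in> M b" using neg_region zin by blast
      moreover have "dist (q - lam *\<^sub>R n) q < e" using lam n1 by (simp add: dist_norm)
      ultimately show "\<exists>y\<in>M b. dist y q < e" by blast
    qed
    have cab: "c \<in> {a,b}" if c: "c \<in> {1..l}" "q \<in> closure (M c)" for c
    proof -
      obtain z where z: "z \<in> M c" "dist z q < eta"
        using closure_approachable[THEN iffD1, OF c(2), rule_format, OF eta(1)] by blast
      have zV: "z \<in> V" using z eta by (auto simp: dist_commute)
      have "z \<notin> GG M l" using M_notG c z by blast
      moreover have "z \<in> U" using zV VU by blast
      ultimately have "f z \<noteq> 0" using inG by blast
      then have "z \<in> M a \<or> z \<in> M b"
      proof (cases "f z > 0")
        case True
        then show ?thesis using pos_region[OF zV] by blast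
      next
        case False
        then have "f z < 0" using \<open>f z \<noteq> 0\<close> by linarith
        then show ?thesis using neg_region[OF zV] by blast
      qed
      moreover have "c = a" if "z \<in> M a"
      proof (rule ccontr)
        assume "c \<noteq> a"
        then have "M c \<inter> M a = {}" using disj_M[rule_format, OF c(1) a(1)] by blast
        then show False using z(1) that by blast
      qed
      moreover have "c = b" if "z \<in> M b"
      proof (rule ccontr)
        assume "c \<noteq> b"
        then have "M c \<inter> M b = {}" using disj_M[rule_format, OF c(1) b(1)] by blast
        then show False using z(1) that by blast
      qed
      ultimately show ?thesis by blast
    qed
    show "SS M l q = {a,b}"
    proof (rule set_eqI)
      fix i
      show "i \<in> SS M l q \<longleftrightarrow> i \<in> {a,b}"
      proof
        assume "i \<in> SS M l q"
        then have "i \<in> {1..l}" "q \<in> closure (M i)" by (auto simp: SS_def)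
        then show "i \<in> {a,b}" by (rule cab)
      next
        assume "i \<in> {a,b}"
        then show "i \<in> SS M l q" using qa qbb a(1) b(1) by (auto simp: SS_def)
      qed
    qed
  qed
  then show ?thesis using oV pV by blast
qed

end

context setting
begin

lemma card_SS: assumes p: "p \<in> GG M l" shows "\<exists>i j. SS M l p = {i, j}"
proof -
  obtain V a b where V: "open V" "p \<in> V" "\<forall>q\<in>GG M l \<inter> V. SS M l q = {a,b}"
    using local_chart[OF p] by blast
  have "p \<in> GG M l \<inter> V" using p V(2) by blast
  with V(3) have "SS M l p = {a,b}" by (rule bspec)
  then show ?thesis by blast
qed

lemma conn_const:
  assumes C: "connected C" "C \<subseteq> GG M l" and pq: "p \<in> C" "q \<in> C"
  shows "SS M l p = SS M l q"
proof (rule connected_local_const[where f = "SS M l", OF C(1) pq])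
  show "\<forall>a\<in>C. eventually (\<lambda>b. SS M l a = SS M l b) (at a within C)"
  proof
    fix a assume a: "a \<in> C"
    then have aG: "a \<in> GG M l" using C by blast
    obtain V a1 b1 where V: "open V" "a \<in> V" "\<forall>q\<in>GG M l \<inter> V. SS M l q = {a1,b1}"
      using local_chart[OF aG] by blast
    show "eventually (\<lambda>b. SS M l a = SS M l b) (at a within C)"
      unfolding eventually_at_topological
    proof (intro exI conjI)
      show "open V" "a \<in> V" by (rule V(1), rule V(2))
      show "\<forall>x\<in>V. x \<noteq> a \<longrightarrow> x \<in> C \<longrightarrow> SS M l a = SS M l x"
        using V(3) aG V(2) C(2) by blast
    qed
  qed
qed

lemma unique_proj:
  assumes a: "a \<in> GG M l" and ya: "dist y a < R"
  shows "\<exists>!z. z \<in> GG M l \<and> (\<forall>b\<in>GG M l. dist y z \<le> dist y b)"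
proof (cases "y \<in> GG M l")
  case True
  show ?thesis
  proof (rule ex1I[of _ y])
    show "y \<in> GG M l \<and> (\<forall>b\<in>GG M l. dist y y \<le> dist y b)" using True by simp
    fix z assume "z \<in> GG M l \<and> (\<forall>b\<in>GG M l. dist y z \<le> dist y b)"
    then have "dist y z \<le> 0" using True by fastforce
    then show "z = y" by simp
  qed
next
  case False
  define Q where "Q r \<longleftrightarrow> (\<forall>x. x \<notin> GG M l \<and> (\<exists>a\<in>GG M l. dist x a < r) \<longrightarrow>
       (\<exists>!y. y \<in> GG M l \<and> (\<forall>a\<in>GG M l. dist x y \<le> dist x a)))" for r
  have rq: "reach (GG M l) = Sup {ereal r | r. Q r}" by (simp add: reach_def Q_def)
  have "ereal (dist y a) < ereal R" using ya by simp
  also have "\<dots> \<le> reach (GG M l)" by (rule reach)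
  finally have "ereal (dist y a) < Sup {ereal r | r. Q r}" unfolding rq .
  then have "\<exists>e\<in>{ereal r | r. Q r}. ereal (dist y a) < e" by (simp only: less_Sup_iff)
  then obtain r where Qr: "Q r" and "ereal (dist y a) < ereal r" by blast
  then have dr: "dist y a < r" by simp
  have "y \<notin> GG M l \<and> (\<exists>a\<in>GG M l. dist y a < r)" using False a dr by blast
  with Qr show ?thesis unfolding Q_def by blast
qed

lemma near_const:
  assumes p: "p \<in> GG M l" and q: "q \<in> GG M l" and pq: "dist p q < 2 * R"
  shows "SS M l p = SS M l q"
proof -
  let ?G = "GG M l"
  let ?T = "closed_segment p q"
  have near: "\<exists>a\<in>?G. dist y a < R" if y: "y \<in> ?T" for y
  proof -
    obtain u where u: "0 \<le> u" "u \<le> 1" "y = (1 - u) *\<^sub>R p + u *\<^sub>R q"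
      using y by (auto simp: closed_segment_def)
    have d1: "dist y p = u * dist p q"
    proof -
      have "y - p = u *\<^sub>R (q - p)" using u by (simp add: algebra_simps)
      then show ?thesis using u by (simp add: dist_norm norm_minus_commute)
    qed
    have d2: "dist y q = (1 - u) * dist p q"
    proof -
      have "y - q = (1 - u) *\<^sub>R (p - q)" using u by (simp add: algebra_simps)
      then show ?thesis using u by (simp add: dist_norm)
    qed
    show ?thesis
    proof (cases "u \<le> 1/2")
      case True
      then have "dist y p \<le> dist p q / 2" unfolding d1 by (simp add: mult_right_mono[of u "1/2" "dist p q", simplified])
      then show ?thesis using p pq by (intro bexI[of _ p]) auto
    next
      case False
      then have "dist y q \<le> dist p q / 2" unfolding d2 using mult_right_mono[of "1 - u" "1/2" "dist p q"] by simp
      then show ?thesis using q pq by (intro bexI[of _ q]) auto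
    qed
  qed
  have ex1: "\<exists>!z. z \<in> ?G \<and> (\<forall>b\<in>?G. dist y z \<le> dist y b)" if yT: "y \<in> ?T" for y
  proof -
    obtain a where "a \<in> ?G" "dist y a < R" using near[OF yT] by blast
    then show ?thesis by (rule unique_proj)
  qed
  define P where "P y = (THE z. z \<in> ?G \<and> (\<forall>b\<in>?G. dist y z \<le> dist y b))" for y
  have Pprop: "P y \<in> ?G \<and> (\<forall>b\<in>?G. dist y (P y) \<le> dist y b)" if "y \<in> ?T" for y
    unfolding P_def by (rule theI'[OF ex1[OF that]])
  have Puniq: "P y = z" if "y \<in> ?T" "z \<in> ?G" "\<forall>b\<in>?G. dist y z \<le> dist y b" for y z
    unfolding P_def by (rule the1_equality[OF ex1[OF that(1)]]) (use that in blast)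
  have graph: "(\<lambda>y. (y, P y)) ` ?T = (?T \<times> ?G) \<inter> (\<Inter>b\<in>?G. {yz. dist (fst yz) (snd yz) \<le> dist (fst yz) b})"
  proof (intro set_eqI iffI)
    fix w assume "w \<in> (\<lambda>y. (y, P y)) ` ?T"
    then obtain y where "y \<in> ?T" "w = (y, P y)" by blast
    then show "w \<in> (?T \<times> ?G) \<inter> (\<Inter>b\<in>?G. {yz. dist (fst yz) (snd yz) \<le> dist (fst yz) b})"
      using Pprop by auto
  next
    fix w assume w: "w \<in> (?T \<times> ?G) \<inter> (\<Inter>b\<in>?G. {yz. dist (fst yz) (snd yz) \<le> dist (fst yz) b})"
    obtain y z where yz: "w = (y, z)" by fastforce
    have "y \<in> ?T" "z \<in> ?G" "\<forall>b\<in>?G. dist y z \<le> dist y b" using w yz by auto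
    then have "P y = z" using Puniq by blast
    then show "w \<in> (\<lambda>y. (y, P y)) ` ?T" using yz \<open>y \<in> ?T\<close> by force
  qed
  have "closed ((\<lambda>y. (y, P y)) ` ?T)"
    unfolding graph
    by (intro closed_Int closed_Times closed_segment G_closed closed_INT ballI closed_Collect_le continuous_intros)
  moreover have "P \<in> ?T \<rightarrow> ?G" using Pprop by blast
  ultimately have cont: "continuous_on ?T P"
    using continuous_from_closed_graph[OF G_compact] by blast
  have "connected (P ` ?T)" using connected_continuous_image[OF cont connected_segment] .
  moreover have "P ` ?T \<subseteq> ?G" using Pprop by blast
  moreover have "P p = p" using Puniq[of p p] p by simp
  moreover have "P q = q" using Puniq[of q q] q by simp
  ultimately show ?thesis
    using conn_const[of "P ` ?T" p q] by (metis ends_in_segment(1,2) image_eqI)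
qed

end

theorem lemma11:
  fixes M :: "nat \<Rightarrow> 'a::euclidean_space set" and l :: nat and R h :: real and x :: 'a
  assumes open_M: "\<forall>i\<in>{1..l}. openin (top_of_set (cbox 0 One)) (M i)"
    and disj_M: "\<forall>i\<in>{1..l}. \<forall>j\<in>{1..l}. i \<noteq> j \<longrightarrow> M i \<inter> M j = {}"
    and cover: "(\<Union>i\<in>{1..l}. closure (M i)) = cbox 0 One"
    and hyp: "C11_hypersurface ((\<Union>i\<in>{1..l}. frontier (M i)) \<inter> box 0 One)"
    and reach: "reach ((\<Union>i\<in>{1..l}. frontier (M i)) \<inter> box 0 One) \<ge> ereal R"
    and bdist: "\<forall>p\<in>(\<Union>i\<in>{1..l}. frontier (M i)) \<inter> box 0 One.
                  \<forall>q\<in>frontier (cbox 0 One). R \<le> dist p q"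
    and x: "x \<in> cbox 0 One"
    and h: "0 < h" "h < R"
  shows "\<exists>i\<in>{1..l}. \<exists>j\<in>{1..l}.
           cball x h \<inter> cbox 0 One \<subseteq> closure (M i) \<union> closure (M j)"
proof -
  interpret setting M l R
  proof -
    have "R > 0" using h by linarith
    then show "setting M l R"
      unfolding setting_def GG_def using open_M disj_M cover hyp reach bdist by (intro conjI)
  qed
  define I where "I = {i\<in>{1..l}. closure (M i) \<inter> ball x h \<noteq> {}}"
  let ?K = "\<Union>i\<in>I. closure (M i)"
  have I1: "I \<subseteq> {1..l}" by (auto simp: I_def)
  have fin: "finite I" using I1 finite_subset by blast
  have stepA: "cball x h \<inter> cbox 0 One \<subseteq> ?K"
  proof
    fix y assume y: "y \<in> cball x h \<inter> cbox 0 One"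
    have cK: "closed ?K" using fin by (intro closed_UN) auto
    have "\<forall>e>0. \<exists>z\<in>?K. dist z y < e"
    proof (intro allI impI)
      fix e :: real assume e: "e > 0"
      define s where "s = min 1 (e / (dist x y + 1))"
      have dpos: "0 < dist x y + 1" using zero_le_dist[of x y] by linarith
      have s: "0 < s" "s \<le> 1" using e dpos by (auto simp: s_def)
      define z where "z = y + s *\<^sub>R (x - y)"
      have zc: "z = (1 - s) *\<^sub>R y + s *\<^sub>R x" by (simp add: z_def algebra_simps)
      have "z \<in> cbox 0 One"
        using convex_box(1)[of 0 One] x y s unfolding zc convex_alt by (auto simp: algebra_simps)
      moreover have dxz: "dist x z = (1 - s) * dist x y"
      proof -
        have "x - z = (1 - s) *\<^sub>R (x - y)" by (simp add: z_def algebra_simps)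
        then show ?thesis using s by (simp add: dist_norm)
      qed
      have "z \<in> ball x h"
      proof -
        have "(1 - s) * dist x y \<le> (1 - s) * h" using y s by (intro mult_left_mono) auto
        also have "\<dots> < h" using s h by simp
        finally show ?thesis using dxz by simp
      qed
      moreover have "dist z y < e"
      proof -
        have "z - y = s *\<^sub>R (x - y)" by (simp add: z_def)
        then have "dist z y = s * dist x y" using s by (simp add: dist_norm)
        also have "\<dots> \<le> (e / (dist x y + 1)) * dist x y"
          by (intro mult_right_mono) (auto simp: s_def)
        also have "\<dots> < e"
        proof -
          have "(e / (dist x y + 1)) * dist x y = e * (dist x y / (dist x y + 1))" by simp
          also have "\<dots> < e * 1" using e dpos by (intro mult_strict_left_mono) (auto simp: divide_less_eq)
          finally show ?thesis by simp
        qed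
        finally show ?thesis .
      qed
      moreover obtain k where "k \<in> {1..l}" "z \<in> closure (M k)" using cover calculation(1) by blast
      ultimately show "\<exists>z\<in>?K. dist z y < e" unfolding I_def by blast
    qed
    then show "y \<in> ?K" using cK closed_approachable by blast
  qed
  have pick: "\<exists>a1. a1 \<in> M a \<inter> box 0 One \<inter> ball x h" if a: "a \<in> I" for a
  proof -
    have a1: "a \<in> {1..l}" and ne: "closure (M a) \<inter> ball x h \<noteq> {}" using a by (auto simp: I_def)
    have "ball x h \<inter> closure (M a \<inter> box 0 One) \<noteq> {}" using ne M_closure[OF a1] by (simp add: Int_commute)
    then have "ball x h \<inter> (M a \<inter> box 0 One) \<noteq> {}" using open_Int_closure_eq_empty[of "ball x h"] by auto
    then show ?thesis by blast
  qed
  have stepB: "\<exists>p\<in>GG M l \<inter> ball x h. a \<in> SS M l p" if a: "a \<in> I" and b: "b \<in> I" and ab: "a \<noteq> b" for a b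
  proof -
    obtain a1 where a1: "a1 \<in> M a \<inter> box 0 One \<inter> ball x h" using pick[OF a] by blast
    obtain b1 where b1: "b1 \<in> M b \<inter> box 0 One \<inter> ball x h" using pick[OF b] by blast
    have al: "a \<in> {1..l}" "b \<in> {1..l}" using a b I1 by auto
    let ?L = "closed_segment a1 b1"
    have Lsub: "?L \<subseteq> box 0 One \<inter> ball x h"
      using a1 b1 by (intro closed_segment_subset convex_Int convex_box convex_ball) auto
    have "\<exists>p\<in>?L. p \<in> closure (M a) \<and> p \<notin> M a"
    proof (rule ccontr)
      assume "\<not> ?thesis"
      then have eq: "?L \<inter> M a = ?L \<inter> closure (M a)" using closure_subset by blast
      have op: "openin (top_of_set ?L) (?L \<inter> M a)"
      proof -
        have "?L \<inter> M a = ?L \<inter> (M a \<inter> box 0 One)" using Lsub by blast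
        then show ?thesis using M_open[OF al(1)] by (metis openin_open_Int Int_commute)
      qed
      have cl: "closedin (top_of_set ?L) (?L \<inter> M a)"
        unfolding eq by (metis closedin_closed_Int closed_closure Int_commute)
      have "?L \<inter> M a = {} \<or> ?L \<inter> M a = ?L"
        using connected_clopen[THEN iffD1, OF connected_segment, rule_format, OF conjI[OF op cl]] by blast
      moreover have "a1 \<in> ?L \<inter> M a" using a1 by auto
      moreover have "b1 \<notin> M a" using b1 disj_M al ab by blast
      ultimately show False by auto
    qed
    then obtain p where p: "p \<in> ?L" "p \<in> closure (M a)" "p \<notin> M a" by blast
    have "p \<notin> interior (M a)" using p(3) interior_subset by blast
    then have "p \<in> frontier (M a)" using p(2) by (simp add: frontier_def)
    moreover have "p \<in> box 0 One \<inter> ball x h" using p(1) Lsub by blast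
    ultimately have "p \<in> GG M l \<inter> ball x h" using al by (auto simp: GG_def)
    moreover have "a \<in> SS M l p" using p(2) al by (simp add: SS_def)
    ultimately show ?thesis by blast
  qed
  have stepC: "SS M l p = SS M l q" if "p \<in> GG M l \<inter> ball x h" "q \<in> GG M l \<inter> ball x h" for p q
  proof (rule near_const)
    show "p \<in> GG M l" "q \<in> GG M l" using that by auto
    have "dist p q \<le> dist p x + dist x q" by (rule dist_triangle)
    also have "\<dots> < 2 * R" using that h by (simp add: dist_commute)
    finally show "dist p q < 2 * R" .
  qed
  have l1: "1 \<in> {1..l}"
  proof (rule ccontr)
    assume "1 \<notin> {1..l}"
    then have "{1..l} = {}" by auto
    then have "cbox 0 One = ({}::'a set)" using cover by simp
    then show False by simp
  qed
  have "\<exists>i\<in>{1..l}. \<exists>j\<in>{1..l}. I \<subseteq> {i, j}"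
  proof (cases "\<exists>a\<in>I. \<exists>b\<in>I. a \<noteq> b")
    case True
    then obtain a b where ab: "a \<in> I" "b \<in> I" "a \<noteq> b" by blast
    obtain p where p: "p \<in> GG M l \<inter> ball x h" "a \<in> SS M l p" using stepB[OF ab] by blast
    have "c \<in> SS M l p" if c: "c \<in> I" for c
    proof (cases "c = a")
      case True then show ?thesis using p by simp
    next
      case False
      obtain q where q: "q \<in> GG M l \<inter> ball x h" "c \<in> SS M l q" using stepB[OF c ab(1) False] by blast
      then show ?thesis using stepC[OF p(1) q(1)] by simp
    qed
    moreover obtain i j where ij: "SS M l p = {i, j}" using card_SS p(1) by blast
    moreover have "SS M l p \<subseteq> {1..l}" by (auto simp: SS_def)
    ultimately show ?thesis by blast
  next
    case False
    then have "I \<subseteq> {1} \<or> (\<exists>a\<in>{1..l}. I \<subseteq> {a})" using I1 by blast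
    then show ?thesis using l1 by blast
  qed
  then obtain i j where ij: "i \<in> {1..l}" "j \<in> {1..l}" "I \<subseteq> {i, j}" by blast
  have "?K \<subseteq> closure (M i) \<union> closure (M j)" using ij(3) by blast
  then show ?thesis using stepA ij(1,2) by blast
qed

end
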